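(* In the non-binary voting game (with a sequence of instances sharing the same parameters), there exists a constant $N_\mu>0$ such that for all $N>N_\mu$, the fraction of friendly agents satisfies $N_F/N<\mu$ and the fraction of unfriendly agents satisfies $N_U/N<1-\mu$.
   Context: Non-binary voting game. $N$ agents vote for $\mathbf{A}$ or $\mathbf{R}$; world states $\{1,\dots,\mathcal{W}\}$; threshold $\mu\in(0,1)$. Agent $n$ has utility $v_n$ on states $\times\{\mathbf{A},\mathbf{R}\}$ with $v_n(w,\mathbf{A})$ strictly increasing, $v_n(w,\mathbf{R})$ strictly decreasing in $w$, and $v_n(w,\mathbf{A})\ne v_n(w,\mathbf{R})$. Constants $\alpha^{\mathbf{A}}_w$, $\alpha^{\mathbf{R}}_w=1-\alpha^{\mathbf{A}}_w$ independent of $N$: exactly $\lfloor\alpha^{\mathbf{R}}_wN\rfloor$ agents prefer $\mathbf{R}$ in state $w$, the other $N-\lfloor\alpha^{\mathbf{R}}_wN\rfloor$ prefer $\mathbf{A}$; $\alpha^{\mathbf{A}}_w\ne\mu$ for all $w$. $\mathcal{L}=\{w:\alpha^{\mathbf{A}}_w<\mu\}$ and $\mathcal{H}=\{w:\alpha^{\mathbf{A}}_w>\mu\}$ are both nonempty. For agent $n$, $\mathcal{L}_n=\{w:v_n(w,\mathbf{R})>v_n(w,\mathbf{A})\}$, $\mathcal{H}_n=\{w:v_n(w,\mathbf{A})>v_n(w,\mathbf{R})\}$; $n$ is friendly if $\mathcal{L}\cap\mathcal{H}_n\ne\emptyset$, unfriendly if $\mathcal{H}\cap\mathcal{L}_n\ne\emptyset$.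 $N_F$, $N_U$ denote the numbers of friendly and unfriendly agents in the instance with $N$ agents. *)

theory Defs
  imports Complex_Main
begin

datatype vote = Acc | Rej

definition L_states :: "(nat \<Rightarrow> real) \<Rightarrow> real \<Rightarrow> nat \<Rightarrow> nat set" where
  "L_states alphaA mu W = {w \<in> {1..W}. alphaA w < mu}"

definition H_states :: "(nat \<Rightarrow> real) \<Rightarrow> real \<Rightarrow> nat \<Rightarrow> nat set" where
  "H_states alphaA mu W = {w \<in> {1..W}. alphaA w > mu}"

definition L_agent :: "(nat \<Rightarrow> vote \<Rightarrow> real) \<Rightarrow> nat \<Rightarrow> nat set" where
  "L_agent u W = {w \<in> {1..W}. u w Rej > u w Acc}"

definition H_agent :: "(nat \<Rightarrow> vote \<Rightarrow> real) \<Rightarrow> nat \<Rightarrow> nat set" where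
  "H_agent u W = {w \<in> {1..W}. u w Acc > u w Rej}"

definition friendly :: "(nat \<Rightarrow> real) \<Rightarrow> real \<Rightarrow> nat \<Rightarrow> (nat \<Rightarrow> vote \<Rightarrow> real) \<Rightarrow> bool" where
  "friendly alphaA mu W u \<longleftrightarrow> L_states alphaA mu W \<inter> H_agent u W \<noteq> {}"

definition unfriendly :: "(nat \<Rightarrow> real) \<Rightarrow> real \<Rightarrow> nat \<Rightarrow> (nat \<Rightarrow> vote \<Rightarrow> real) \<Rightarrow> bool" where
  "unfriendly alphaA mu W u \<longleftrightarrow> H_states alphaA mu W \<inter> L_agent u W \<noteq> {}"

end

theory Submission
  imports Defs
begin

theorem proposition1:
  fixes W :: nat and mu :: real and alphaA :: "nat \<Rightarrow> real"
    and v :: "nat \<Rightarrow> nat \<Rightarrow> nat \<Rightarrow> vote \<Rightarrow> real"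
    \<comment> \<open>v N n w a: utility of agent n (n < N) in the instance with N agents, state w, outcome a\<close>
  assumes W_pos: "W \<ge> 1"
    and mu: "0 < mu" "mu < 1"
    and incA: "\<And>N n w w'. n < N \<Longrightarrow> w \<in> {1..W} \<Longrightarrow> w' \<in> {1..W} \<Longrightarrow> w < w'
                 \<Longrightarrow> v N n w Acc < v N n w' Acc"
    and decR: "\<And>N n w w'. n < N \<Longrightarrow> w \<in> {1..W} \<Longrightarrow> w' \<in> {1..W} \<Longrightarrow> w < w'
                 \<Longrightarrow> v N n w Rej > v N n w' Rej"
    and neq: "\<And>N n w. n < N \<Longrightarrow> w \<in> {1..W} \<Longrightarrow> v N n w Acc \<noteq> v N n w Rej"
    and count_R: "\<And>N w. w \<in> {1..W} \<Longrightarrow>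
         card {n. n < N \<and> v N n w Rej > v N n w Acc} = nat \<lfloor>(1 - alphaA w) * real N\<rfloor>"
    and count_A: "\<And>N w. w \<in> {1..W} \<Longrightarrow>
         card {n. n < N \<and> v N n w Acc > v N n w Rej} = N - nat \<lfloor>(1 - alphaA w) * real N\<rfloor>"
    and alpha_ne_mu: "\<And>w. w \<in> {1..W} \<Longrightarrow> alphaA w \<noteq> mu"
    and L_ne: "L_states alphaA mu W \<noteq> {}"
    and H_ne: "H_states alphaA mu W \<noteq> {}"
  shows "\<exists>Nmu::real. Nmu > 0 \<and> (\<forall>N::nat. real N > Nmu \<longrightarrow>
           real (card {n. n < N \<and> friendly alphaA mu W (v N n)}) / real N < mu \<and>
           real (card {n. n < N \<and> unfriendly alphaA mu W (v N n)}) / real N < 1 - mu)"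
proof -
  let ?L = "L_states alphaA mu W" and ?H = "H_states alphaA mu W"
  have finL: "finite ?L" unfolding L_states_def by auto
  have finH: "finite ?H" unfolding H_states_def by auto
  define wL where "wL = Max ?L"
  define wH where "wH = Min ?H"
  have wL_in: "wL \<in> ?L" using finL L_ne wL_def Max_in by blast
  have wH_in: "wH \<in> ?H" using finH H_ne wH_def Min_in by blast
  have wL_max: "\<And>w. w \<in> ?L \<Longrightarrow> w \<le> wL" using finL wL_def by simp
  have wH_min: "\<And>w. w \<in> ?H \<Longrightarrow> wH \<le> w" using finH wH_def by simp
  have a: "alphaA wL < mu" "wL \<in> {1..W}" using wL_in unfolding L_states_def by auto
  have b: "alphaA wH > mu" "wH \<in> {1..W}" using wH_in unfolding H_states_def by auto
  have up: "v N n w' Acc > v N n w' Rej"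
    if "n < N" "w \<in> {1..W}" "w' \<in> {1..W}" "w \<le> w'" "v N n w Acc > v N n w Rej" for N n w w'
  proof (cases "w = w'")
    case False
    then have "w < w'" using that by simp
    from incA[OF that(1-3) this] decR[OF that(1-3) this] that(5) show ?thesis by linarith
  qed (use that in simp)
  have down: "v N n w Rej > v N n w Acc"
    if "n < N" "w \<in> {1..W}" "w' \<in> {1..W}" "w \<le> w'" "v N n w' Rej > v N n w' Acc" for N n w w'
  proof (cases "w = w'")
    case False
    then have "w < w'" using that by simp
    from incA[OF that(1-3) this] decR[OF that(1-3) this] that(5) show ?thesis by linarith
  qed (use that in simp)
  have F: "{n. n < N \<and> friendly alphaA mu W (v N n)} = {n. n < N \<and> v N n wL Acc > v N n wL Rej}" for N
  proof (intro set_eqI iffI)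
    fix n assume "n \<in> {n. n < N \<and> friendly alphaA mu W (v N n)}"
    then obtain w where "n < N" "w \<in> ?L" "w \<in> H_agent (v N n) W"
      unfolding friendly_def by blast
    then show "n \<in> {n. n < N \<and> v N n wL Acc > v N n wL Rej}"
      using up[of n N w wL] wL_max[of w] a(2) unfolding L_states_def H_agent_def by auto
  next
    fix n assume "n \<in> {n. n < N \<and> v N n wL Acc > v N n wL Rej}"
    then show "n \<in> {n. n < N \<and> friendly alphaA mu W (v N n)}"
      using wL_in a(2) unfolding friendly_def H_agent_def by blast
  qed
  have U: "{n. n < N \<and> unfriendly alphaA mu W (v N n)} = {n. n < N \<and> v N n wH Rej > v N n wH Acc}" for N
  proof (intro set_eqI iffI)
    fix n assume "n \<in> {n. n < N \<and> unfriendly alphaA mu W (v N n)}"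
    then obtain w where "n < N" "w \<in> ?H" "w \<in> L_agent (v N n) W"
      unfolding unfriendly_def by blast
    then show "n \<in> {n. n < N \<and> v N n wH Rej > v N n wH Acc}"
      using down[of n N wH w] wH_min[of w] b(2) unfolding H_states_def L_agent_def by auto
  next
    fix n assume "n \<in> {n. n < N \<and> v N n wH Rej > v N n wH Acc}"
    then show "n \<in> {n. n < N \<and> unfriendly alphaA mu W (v N n)}"
      using wH_in b(2) unfolding unfriendly_def L_agent_def by blast
  qed
  define d where "d = mu - alphaA wL"
  have dpos: "d > 0" using a d_def by simp
  show ?thesis
  proof (intro exI conjI allI impI)
    show "1 / d > 0" using dpos by simp
    fix N :: nat assume N: "real N > 1 / d"
    then have Npos: "real N > 0" using dpos
      by (meson less_trans zero_less_divide_1_iff)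
    have "d * real N > 1" using N dpos by (simp add: field_simps)
    then have key: "alphaA wL * real N + 1 < mu * real N" unfolding d_def by (simp add: algebra_simps)
    define x where "x = (1 - alphaA wL) * real N"
    have x0: "x \<ge> 0" using a mu Npos unfolding x_def by simp
    have cF: "real (N - nat \<lfloor>x\<rfloor>) < mu * real N"
    proof (cases "nat \<lfloor>x\<rfloor> \<le> N")
      case True
      then have e1: "real (N - nat \<lfloor>x\<rfloor>) = real N - real (nat \<lfloor>x\<rfloor>)" by simp
      have e2: "real (nat \<lfloor>x\<rfloor>) = of_int \<lfloor>x\<rfloor>" using x0 by simp
      have e3: "of_int \<lfloor>x\<rfloor> > x - 1" by linarith
      have "x = real N - alphaA wL * real N" unfolding x_def by (simp add: algebra_simps)
      with e1 e2 e3 key show ?thesis by linarith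
    next
      case False
      then show ?thesis using mu Npos by simp
    qed
    show "real (card {n. n < N \<and> friendly alphaA mu W (v N n)}) / real N < mu"
      using cF count_A[OF a(2), of N] Npos unfolding F x_def by (simp add: divide_less_eq)
    define y where "y = (1 - alphaA wH) * real N"
    have y: "y < (1 - mu) * real N" using b Npos unfolding y_def by (simp add: mult_strict_right_mono)
    have cU: "real (nat \<lfloor>y\<rfloor>) < (1 - mu) * real N"
    proof (cases "y \<ge> 0")
      case True
      then have "real (nat \<lfloor>y\<rfloor>) = of_int \<lfloor>y\<rfloor>" by simp
      also have "\<dots> \<le> y" by simp
      finally show ?thesis using y by linarith
    next
      case False
      then have "nat \<lfloor>y\<rfloor> = 0" by simp
      then show ?thesis using mu Npos by simp
    qed
    show "real (card {n. n < N \<and> unfriendly alphaA mu W (v N n)}) / real N < 1 - mu"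
      using cU count_R[OF b(2), of N] Npos unfolding U y_def by (simp add: divide_less_eq)
  qed
qed

end
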